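(* Let $\mathbb{X}$ be a finite set, let $\mathcal{H}_A$ be a finite-dimensional Hilbert space, and let $\{\rho_A^x\}_{x\in\mathbb{X}}$ be density operators on $\mathcal{H}_A$ (the quantum encoding of a discrete random variable $X$ with probability mass function $p_X$ satisfying $p_X(x)>0$ for all $x\in\mathbb{X}$). Then \[ \mathcal{Q}(X\rightarrow A)_{\rho_A}\leq \min_{\pi\in\Delta(\mathbb{X})}\max_{x\in\mathbb{X}}\widetilde{D}_\infty\Big(\rho_A^x\,\Big\|\,\sum_{x'\in\mathbb{X}}\pi(x')\rho_A^{x'}\Big). \]
   Context: All logarithms are base 2. $\Delta(\mathbb{X})$ is the set of probability mass functions on $\mathbb{X}$. For a density operator $\rho$ and a positive semi-definite operator $\sigma$, $\widetilde{D}_\infty(\rho\|\sigma)=\log\big(\inf\{\mu\in\mathbb{R}:\rho\leq\mu\sigma\}\big)$ (operator inequality), with $\widetilde{D}_\infty(\rho\|\sigma)=+\infty$ if the support of $\rho$ is not contained in the support of $\sigma$. The maximal quantum leakage is \[ \mathcal{Q}(X\rightarrow A)_{\rho_A}=\sup_{\{F_y\}_{y\in\mathbb{Y}}}\log\Big(\sum_{y\in\mathbb{Y}}\max_{x\in\mathbb{X}}\operatorname{tr}(\rho_A^xF_y)\Big), \] where the supremum is over all POVMs $\{F_y\}_{y\in\mathbb{Y}}$ on $\mathcal{H}_A$ (positive semi-definite operators summing to the identity) with arbitrary finite outcome set $\mathbb{Y}$. *)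

theory Defs
  imports "HOL-Analysis.Analysis" "HOL-Library.Extended_Real" "Jordan_Normal_Form.Matrix"
begin

text \<open>Operators on the finite-dimensional Hilbert space H_A = C^d are d x d complex matrices.\<close>

definition mat_trace :: "complex mat \<Rightarrow> complex" where
  "mat_trace A = (\<Sum>i<dim_row A. A $$ (i, i))"

definition psd :: "nat \<Rightarrow> complex mat \<Rightarrow> bool" where
  "psd d A \<longleftrightarrow> A \<in> carrier_mat d d
     \<and> (\<forall>i<d. \<forall>j<d. A $$ (i, j) = cnj (A $$ (j, i)))
     \<and> (\<forall>v \<in> carrier_vec d. Im ((A *\<^sub>v v) \<bullet>c v) = 0 \<and> Re ((A *\<^sub>v v) \<bullet>c v) \<ge> 0)"

definition density_op :: "nat \<Rightarrow> complex mat \<Rightarrow> bool" where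
  "density_op d \<rho> \<longleftrightarrow> psd d \<rho> \<and> mat_trace \<rho> = 1"

definition op_le :: "nat \<Rightarrow> complex mat \<Rightarrow> complex mat \<Rightarrow> bool" where
  "op_le d A B \<longleftrightarrow> A \<in> carrier_mat d d \<and> B \<in> carrier_mat d d \<and> psd d (B - A)"

text \<open>supp(rho) \<subseteq> supp(sigma), for PSD operators equivalently ker(sigma) \<subseteq> ker(rho).\<close>
definition supp_subset :: "nat \<Rightarrow> complex mat \<Rightarrow> complex mat \<Rightarrow> bool" where
  "supp_subset d \<rho> \<sigma> \<longleftrightarrow> (\<forall>v \<in> carrier_vec d. \<sigma> *\<^sub>v v = 0\<^sub>v d \<longrightarrow> \<rho> *\<^sub>v v = 0\<^sub>v d)"

definition D_max :: "nat \<Rightarrow> complex mat \<Rightarrow> complex mat \<Rightarrow> ereal" where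
  "D_max d \<rho> \<sigma> =
     (if supp_subset d \<rho> \<sigma>
      then ereal (log 2 (Inf {\<mu>::real. op_le d \<rho> (complex_of_real \<mu> \<cdot>\<^sub>m \<sigma>)}))
      else \<infinity>)"

definition povm :: "nat \<Rightarrow> nat set \<Rightarrow> (nat \<Rightarrow> complex mat) \<Rightarrow> bool" where
  "povm d Y F \<longleftrightarrow> finite Y \<and> (\<forall>y\<in>Y. psd d (F y))
     \<and> (\<forall>i<d. \<forall>j<d. (\<Sum>y\<in>Y. F y $$ (i, j)) = (if i = j then 1 else 0))"

definition max_quantum_leakage ::
  "nat \<Rightarrow> 'x set \<Rightarrow> ('x \<Rightarrow> complex mat) \<Rightarrow> ereal" where
  "max_quantum_leakage d X \<rho> =
     (SUP YF \<in> {(Y, F). povm d Y F}.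
        ereal (log 2 (\<Sum>y\<in>fst YF. Max ((\<lambda>x. Re (mat_trace (\<rho> x * snd YF y))) ` X))))"

definition pmfs_on :: "'x set \<Rightarrow> ('x \<Rightarrow> real) set" where
  "pmfs_on X = {\<pi>. (\<forall>x\<in>X. \<pi> x \<ge> 0) \<and> (\<Sum>x\<in>X. \<pi> x) = 1}"

definition mixture :: "nat \<Rightarrow> 'x set \<Rightarrow> ('x \<Rightarrow> real) \<Rightarrow> ('x \<Rightarrow> complex mat) \<Rightarrow> complex mat" where
  "mixture d X \<pi> \<rho> = mat d d (\<lambda>(i, j). \<Sum>x'\<in>X. complex_of_real (\<pi> x') * \<rho> x' $$ (i, j))"

end

theory Submission
  imports Defs
begin

definition bf :: "nat \<Rightarrow> (nat \<Rightarrow> nat \<Rightarrow> complex) \<Rightarrow> (nat \<Rightarrow> complex) \<Rightarrow> (nat \<Rightarrow> complex) \<Rightarrow> complex" where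
  "bf d A u w = (\<Sum>i<d. \<Sum>j<d. cnj (u i) * A i j * w j)"

abbreviation qf where "qf d A u \<equiv> bf d A u u"

definition herm :: "nat \<Rightarrow> (nat \<Rightarrow> nat \<Rightarrow> complex) \<Rightarrow> bool" where
  "herm d A \<longleftrightarrow> (\<forall>i<d. \<forall>j<d. A i j = cnj (A j i))"

definition psdf :: "nat \<Rightarrow> (nat \<Rightarrow> nat \<Rightarrow> complex) \<Rightarrow> bool" where
  "psdf d A \<longleftrightarrow> herm d A \<and> (\<forall>u. 0 \<le> Re (qf d A u))"

lemma hermD: "herm d A \<Longrightarrow> i < d \<Longrightarrow> j < d \<Longrightarrow> cnj (A i j) = A j i"
  unfolding herm_def by (metis complex_cnj_cnj)

lemma bf_conj:
  assumes "herm d A" shows "cnj (bf d A u w) = bf d A w u"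
proof -
  have "cnj (bf d A u w) = (\<Sum>i<d. \<Sum>j<d. u i * cnj (A i j) * cnj (w j))"
    by (simp add: bf_def)
  also have "\<dots> = (\<Sum>i<d. \<Sum>j<d. u i * A j i * cnj (w j))"
    using assms by (auto simp: hermD intro!: sum.cong)
  also have "\<dots> = bf d A w u"
    unfolding bf_def by (subst sum.swap) (simp add: mult.commute mult.left_commute)
  finally show ?thesis .
qed

lemma qf_real: assumes "herm d A" shows "Im (qf d A u) = 0"
  using bf_conj[OF assms, of u u] by (simp add: complex_eq_iff)

lemma qf_of_real: assumes "herm d A" shows "qf d A u = complex_of_real (Re (qf d A u))"
  using qf_real[OF assms] by (simp add: complex_eq_iff)

lemma bf_add_left: "bf d A (\<lambda>k. u k + w k) v = bf d A u v + bf d A w v"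
  by (simp add: bf_def algebra_simps sum.distrib)
lemma bf_add_right: "bf d A v (\<lambda>k. u k + w k) = bf d A v u + bf d A v w"
  by (simp add: bf_def algebra_simps sum.distrib)
lemma bf_scale_left: "bf d A (\<lambda>k. z * u k) v = cnj z * bf d A u v"
  by (simp add: bf_def algebra_simps sum_distrib_left)
lemma bf_scale_right: "bf d A v (\<lambda>k. z * u k) = z * bf d A v u"
  by (simp add: bf_def algebra_simps sum_distrib_left)

lemma qf_expand:
  "qf d A (\<lambda>k. u k + z * w k) = qf d A u + z * bf d A u w + cnj z * bf d A w u + cnj z * z * qf d A w"
  by (simp add: bf_add_left bf_add_right bf_scale_left bf_scale_right algebra_simps)

lemma bcnj: "b * cnj b = (complex_of_real (cmod b))^2"
  by (metis complex_norm_square of_real_power)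

lemma qf_expand_re:
  assumes "herm d A"
  shows "Re (qf d A (\<lambda>k. u k + z * w k)) = Re (qf d A u) + 2 * Re (z * bf d A u w) + (cmod z)^2 * Re (qf d A w)"
proof -
  have c: "bf d A w u = cnj (bf d A u w)" using bf_conj[OF assms] by simp
  have "Re (cnj z * bf d A w u) = Re (z * bf d A u w)" unfolding c
    by (simp only: complex_cnj_mult[symmetric]) simp
  moreover have "cnj z * z = complex_of_real ((cmod z)^2)"
    by (metis bcnj mult.commute of_real_power)
  moreover have "Re (complex_of_real r * qf d A w) = r * Re (qf d A w)" for r
    by simp
  ultimately show ?thesis unfolding qf_expand by simp
qed

lemma psd_zero:
  assumes "psdf d A" "Re (qf d A w) = 0"
  shows "bf d A u w = 0"
proof (rule ccontr)
  assume b0: "bf d A u w \<noteq> 0"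
  define b where "b = bf d A u w"
  define p where "p = Re (qf d A u)"
  have h: "herm d A" using assms unfolding psdf_def by auto
  define t where "t = (\<bar>p\<bar> + 1) / (2 * (cmod b)^2)"
  have bpos: "cmod b > 0" using b0 b_def by simp
  have "0 \<le> Re (qf d A (\<lambda>k. u k + (- of_real t * cnj b) * w k))"
    using assms unfolding psdf_def by auto
  also have "\<dots> = p + 2 * Re (- of_real t * cnj b * b)"
    unfolding qf_expand_re[OF h] using assms(2) by (simp add: p_def b_def)
  also have "- of_real t * cnj b * b = - of_real (t * (cmod b)^2)"
    by (simp add: bcnj mult.commute mult.left_commute)
  also have "t * (cmod b)^2 = (\<bar>p\<bar> + 1) / 2" unfolding t_def using bpos by (simp add: field_simps)
  finally show False by simp
qed

lemma cs:
  assumes "psdf d A" "Re (qf d A w) > 0"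
  shows "(cmod (bf d A u w))^2 \<le> Re (qf d A u) * Re (qf d A w)"
proof -
  define b where "b = bf d A u w"
  define p where "p = Re (qf d A u)"
  define q where "q = Re (qf d A w)"
  have h: "herm d A" using assms unfolding psdf_def by auto
  have "0 \<le> Re (qf d A (\<lambda>k. u k + (- cnj b / of_real q) * w k))"
    using assms unfolding psdf_def by auto
  also have "\<dots> = p + 2 * Re (- cnj b / of_real q * b) + (cmod (- cnj b / of_real q))^2 * q"
    unfolding qf_expand_re[OF h] by (simp add: p_def b_def q_def)
  also have "- cnj b / of_real q * b = - of_real ((cmod b)^2 / q)"
    by (simp add: bcnj mult.commute)
  also have "(cmod (- cnj b / of_real q))^2 * q = (cmod b)^2 / q"
    using assms(2) by (simp add: q_def norm_divide power2_eq_square)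
  finally have "0 \<le> p - (cmod b)^2 / q" by simp
  then have "(cmod b)^2 / q \<le> p" by simp
  then show ?thesis using assms(2) by (simp add: b_def p_def q_def field_simps)
qed

definition ev :: "nat \<Rightarrow> nat \<Rightarrow> complex" where "ev i = (\<lambda>k. if k = i then 1 else 0)"

lemma sum_if_out: "(\<Sum>j\<in>S. if P then f j else 0) = (if P then sum f S else (0::complex))" by simp

lemma bf_ev_right: "i < d \<Longrightarrow> bf d A u (ev i) = (\<Sum>k<d. cnj (u k) * A k i)"
  unfolding bf_def ev_def by (simp add: if_distrib[of "\<lambda>x. _ * x"]  sum.delta' cong: if_cong)
lemma bf_ev_left: "i < d \<Longrightarrow> bf d A (ev i) w = (\<Sum>j<d. A i j * w j)"
  unfolding bf_def ev_def by (simp add: if_distrib[of cnj] if_distrib[of "\<lambda>x. x * _"] sum_if_out cong: if_cong)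
lemma qf_ev: "i < d \<Longrightarrow> qf d A (ev i) = A i i"
  unfolding bf_ev_left by (simp add: ev_def if_distrib[of "\<lambda>x. _ * x"] sum.delta' cong: if_cong)
lemma bf_ev_ev: "i < d \<Longrightarrow> k < d \<Longrightarrow> bf d A (ev k) (ev i) = A k i"
  unfolding bf_ev_left by (simp add: ev_def if_distrib[of "\<lambda>x. _ * x"] sum.delta' cong: if_cong)

lemma diag_real: "herm d A \<Longrightarrow> i < d \<Longrightarrow> A i i = complex_of_real (Re (A i i))"
  using hermD[of d A i i] by (simp add: complex_eq_iff)

lemma diag_nonneg: "psdf d A \<Longrightarrow> i < d \<Longrightarrow> 0 \<le> Re (A i i)"
  using qf_ev[of i d A] unfolding psdf_def by metis

lemma col_zero: assumes "psdf d A" "i < d" "A i i = 0" "k < d" shows "A k i = 0"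
proof -
  have "Re (qf d A (ev i)) = 0" using qf_ev[OF assms(2)] assms(3) by simp
  from psd_zero[OF assms(1) this, of "ev k"] show ?thesis using bf_ev_ev assms by simp
qed

definition chol :: "(nat \<Rightarrow> nat \<Rightarrow> complex) \<Rightarrow> nat \<Rightarrow> nat \<Rightarrow> nat \<Rightarrow> complex" where
  "chol F i = (\<lambda>k j. F k j - F k i * F i j / F i i)"

lemma chol_qf:
  assumes "i < d"
  shows "qf d (chol F i) u = qf d F u - bf d F u (ev i) * bf d F (ev i) u / F i i"
  unfolding bf_ev_right[OF assms] bf_ev_left[OF assms]
  by (simp add: bf_def chol_def algebra_simps sum_subtractf sum_distrib_left sum_distrib_right sum_divide_distrib)

lemma chol_psd:
  assumes "psdf d F" "i < d" "F i i \<noteq> 0"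
  shows "psdf d (chol F i)"
proof -
  have h: "herm d F" using assms unfolding psdf_def by auto
  define a where "a = Re (F i i)"
  have Fa: "F i i = of_real a" using diag_real[OF h assms(2)] a_def by simp
  have apos: "a > 0" proof -
    have "a \<noteq> 0" using assms(3) Fa by auto
    then show ?thesis using diag_nonneg[OF assms(1,2)] a_def by linarith
  qed
  have "herm d (chol F i)"
    unfolding herm_def chol_def
  proof (intro allI impI)
    fix k j assume kj: "k < d" "j < d"
    show "F k j - F k i * F i j / F i i = cnj (F j k - F j i * F i k / F i i)"
      using hermD[OF h kj(2) kj(1)] hermD[OF h assms(2) kj(1)] hermD[OF h kj(2) assms(2)] Fa
      by simp
  qed
  moreover have "0 \<le> Re (qf d (chol F i) u)" for u
  proof -
    define b where "b = bf d F u (ev i)"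
    have c: "bf d F (ev i) u = cnj b" using bf_conj[OF h] b_def by metis
    have "Re (qf d (chol F i) u) = Re (qf d F u) - (cmod b)^2 / a"
      unfolding chol_qf[OF assms(2)] b_def[symmetric] c Fa bcnj
      by (simp del: of_real_power add: of_real_power[symmetric])
    moreover have "(cmod b)^2 \<le> Re (qf d F u) * a"
      using cs[OF assms(1), of "ev i" u] qf_ev[OF assms(2)] Fa apos b_def by simp
    then have "(cmod b)^2 / a \<le> Re (qf d F u)" using apos by (simp add: pos_divide_le_eq mult.commute)
    ultimately show ?thesis by linarith
  qed
  ultimately show ?thesis unfolding psdf_def by auto
qed

definition nzc :: "nat \<Rightarrow> (nat \<Rightarrow> nat \<Rightarrow> complex) \<Rightarrow> nat" where
  "nzc d F = card {j. j < d \<and> (\<exists>k<d. F k j \<noteq> 0)}"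

lemma chol_nzc:
  assumes "i < d" "F i i \<noteq> 0"
  shows "nzc d (chol F i) < nzc d F"
proof -
  have "{j. j < d \<and> (\<exists>k<d. chol F i k j \<noteq> 0)} \<subset> {j. j < d \<and> (\<exists>k<d. F k j \<noteq> 0)}"
  proof
    show "{j. j < d \<and> (\<exists>k<d. chol F i k j \<noteq> 0)} \<subseteq> {j. j < d \<and> (\<exists>k<d. F k j \<noteq> 0)}"
    proof (intro subsetI CollectI conjI)
      fix x assume x: "x \<in> {j. j < d \<and> (\<exists>k<d. chol F i k j \<noteq> 0)}"
      then show "x < d" by simp
      show "\<exists>k<d. F k x \<noteq> 0"
      proof (rule ccontr)
        assume "\<not> (\<exists>k<d. F k x \<noteq> 0)"
        then have "\<forall>k<d. F k x = 0" by simp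
        then have "\<forall>k<d. chol F i k x = 0" using assms(1) by (simp add: chol_def)
        then show False using x by auto
      qed
    qed
    have "i \<notin> {j. j < d \<and> (\<exists>k<d. chol F i k j \<noteq> 0)}" using assms by (auto simp: chol_def)
    moreover have "i \<in> {j. j < d \<and> (\<exists>k<d. F k j \<noteq> 0)}" using assms by auto
    ultimately show "{j. j < d \<and> (\<exists>k<d. chol F i k j \<noteq> 0)} \<noteq> {j. j < d \<and> (\<exists>k<d. F k j \<noteq> 0)}" by blast
  qed
  then show ?thesis unfolding nzc_def by (intro psubset_card_mono) auto
qed

lemma nzc_zero: "nzc d F = 0 \<Longrightarrow> k < d \<Longrightarrow> j < d \<Longrightarrow> F k j = 0"
  unfolding nzc_def by auto

lemma nzc_pos: assumes "psdf d F" "nzc d F \<noteq> 0" obtains i where "i < d" "F i i \<noteq> 0"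
proof -
  have "{j. j < d \<and> (\<exists>k<d. F k j \<noteq> 0)} \<noteq> {}"
    using assms(2) unfolding nzc_def by (intro notI) simp
  then obtain j k where "j < d" "k < d" "F k j \<noteq> 0" by blast
  then show ?thesis using col_zero[OF assms(1)] that by blast
qed

lemma trace_psd:
  assumes "psdf d P" "psdf d F"
  shows "0 \<le> Re (\<Sum>a<d. \<Sum>b<d. P a b * F b a)"
  using assms(2)
proof (induction "nzc d F" arbitrary: F rule: less_induct)
  case less
  show ?case
  proof (cases "nzc d F = 0")
    case True
    then show ?thesis using nzc_zero[OF True] by simp
  next
    case False
    obtain i where i: "i < d" "F i i \<noteq> 0" using nzc_pos[OF less.prems False] by blast
    have h: "herm d F" using less.prems unfolding psdf_def by auto
    define a where "a = Re (F i i)"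
    have Fa: "F i i = of_real a" using diag_real[OF h i(1)] a_def by simp
    have apos: "a > 0" proof -
      have "a \<noteq> 0" using i(2) Fa by auto
      then show ?thesis using diag_nonneg[OF less.prems i(1)] a_def by linarith
    qed
    have IH: "0 \<le> Re (\<Sum>a<d. \<Sum>b<d. P a b * chol F i b a)"
      using less.hyps[OF chol_nzc[of i d F, OF i(1) i(2)] chol_psd[of d F i, OF less.prems i(1) i(2)]] .
    have "(\<Sum>a<d. \<Sum>b<d. P a b * F b a) = (\<Sum>a<d. \<Sum>b<d. P a b * chol F i b a)
       + (\<Sum>a<d. \<Sum>b<d. F i a * P a b * F b i) / F i i"
    proof -
      have "(\<Sum>a<d. \<Sum>b<d. P a b * F b a) = (\<Sum>a<d. \<Sum>b<d. P a b * chol F i b a + (F i a * P a b * F b i) / F i i)"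
        by (intro sum.cong refl) (simp add: chol_def field_simps)
      also have "\<dots> = (\<Sum>a<d. \<Sum>b<d. P a b * chol F i b a) + (\<Sum>a<d. \<Sum>b<d. (F i a * P a b * F b i) / F i i)"
        by (simp add: sum.distrib)
      also have "(\<Sum>a<d. \<Sum>b<d. (F i a * P a b * F b i) / F i i) = (\<Sum>a<d. \<Sum>b<d. F i a * P a b * F b i) / F i i"
        by (simp add: sum_divide_distrib)
      finally show ?thesis .
    qed
    also have "(\<Sum>a<d. \<Sum>b<d. F i a * P a b * F b i) = qf d P (\<lambda>b. F b i)"
      unfolding bf_def using hermD[OF h _ i(1)] by (auto intro!: sum.cong)
    finally have eq: "(\<Sum>a<d. \<Sum>b<d. P a b * F b a) = (\<Sum>a<d. \<Sum>b<d. P a b * chol F i b a) + qf d P (\<lambda>b. F b i) / of_real a"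
      using Fa by simp
    have "0 \<le> Re (qf d P (\<lambda>b. F b i)) / a" using assms(1) apos unfolding psdf_def by auto
    then show ?thesis unfolding eq using IH by simp
  qed
qed

lemma chol_qf_re:
  assumes "herm d F" "i < d" "F i i \<noteq> 0"
  shows "Re (qf d (chol F i) u) = Re (qf d F u) - (cmod (bf d F u (ev i)))^2 / Re (F i i)"
proof -
  define a where "a = Re (F i i)"
  have Fa: "F i i = of_real a" using diag_real[OF assms(1,2)] a_def by simp
  define b where "b = bf d F u (ev i)"
  have c: "bf d F (ev i) u = cnj b" using bf_conj[OF assms(1)] b_def by metis
  show ?thesis
    unfolding chol_qf[OF assms(2)] b_def[symmetric] c Fa bcnj a_def[symmetric]
    by (simp del: of_real_power add: of_real_power[symmetric])
qed

lemma bf_rank1: "bf d (\<lambda>k l. x k * y l) u w = (\<Sum>k<d. cnj (u k) * x k) * (\<Sum>l<d. y l * w l)"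
  unfolding bf_def sum_product by (simp add: algebra_simps)

lemma bf_diff_mat: "bf d (\<lambda>k l. A k l - B k l) u w = bf d A u w - bf d B u w"
  by (simp add: bf_def algebra_simps sum_subtractf)
lemma bf_add_mat: "bf d (\<lambda>k l. A k l + B k l) u w = bf d A u w + bf d B u w"
  by (simp add: bf_def algebra_simps sum.distrib)

lemma qf_as_rows: "qf d A u = (\<Sum>i<d. cnj (u i) * (\<Sum>j<d. A i j * u j))"
  unfolding bf_def by (simp add: sum_distrib_left mult.assoc)

lemma rows_shift:
  assumes "i < d"
  shows "(\<Sum>j<d. A k j * (u j + z * ev i j)) = (\<Sum>j<d. A k j * u j) + z * A k i"
proof -
  have "(\<Sum>j<d. A k j * (u j + z * ev i j)) = (\<Sum>j<d. A k j * u j) + (\<Sum>j<d. z * (A k j * ev i j))"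
    by (simp add: algebra_simps sum.distrib)
  also have "(\<Sum>j<d. z * (A k j * ev i j)) = z * A k i"
    using assms by (simp add: ev_def sum.delta' if_distrib[of "\<lambda>x. _ * x"] cong: if_cong)
  finally show ?thesis .
qed

lemma parallel:
  assumes "psdf d A"
  shows "Re (qf d A (\<lambda>k. w k + z * v k)) \<le> 2 * Re (qf d A w) + 2 * (cmod z)^2 * Re (qf d A v)"
proof -
  have h: "herm d A" using assms unfolding psdf_def by auto
  have "0 \<le> Re (qf d A (\<lambda>k. w k + (- z) * v k))" using assms unfolding psdf_def by auto
  then have "0 \<le> Re (qf d A w) + 2 * Re ((- z) * bf d A w v) + (cmod (- z))^2 * Re (qf d A v)"
    unfolding qf_expand_re[OF h] .
  moreover have "Re ((- z) * bf d A w v) = - Re (z * bf d A w v)" by simp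
  moreover have "(cmod (- z))^2 * Re (qf d A v) = (cmod z)^2 * Re (qf d A v)" by simp
  ultimately show ?thesis unfolding qf_expand_re[OF h] by linarith
qed

lemma ratio_bound:
  assumes "psdf d S" "psdf d R"
    and "\<forall>u. (\<forall>k<d. (\<Sum>j<d. S k j * u j) = 0) \<longrightarrow> (\<forall>k<d. (\<Sum>j<d. R k j * u j) = 0)"
  shows "\<exists>\<mu>\<ge>0. \<forall>u. Re (qf d R u) \<le> \<mu> * Re (qf d S u)"
  using assms
proof (induction "nzc d S" arbitrary: S R rule: less_induct)
  case less
  show ?case
  proof (cases "nzc d S = 0")
    case True
    have "Re (qf d R u) \<le> 0 * Re (qf d S u)" for u
    proof -
      have "\<forall>k<d. (\<Sum>j<d. S k j * u j) = 0" using nzc_zero[OF True] by simp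
      then have "\<forall>k<d. (\<Sum>j<d. R k j * u j) = 0" using less.prems(3) by blast
      then show ?thesis unfolding qf_as_rows by simp
    qed
    then show ?thesis by blast
  next
    case False
    obtain i where i: "i < d" "S i i \<noteq> 0" using nzc_pos[OF less.prems(1) False] by blast
    have hS: "herm d S" using less.prems unfolding psdf_def by auto
    have hR: "herm d R" using less.prems unfolding psdf_def by auto
    define a where "a = Re (S i i)"
    have Sa: "S i i = of_real a" using diag_real[OF hS i(1)] a_def by simp
    have apos: "a > 0"
    proof -
      have "a \<noteq> 0" using i(2) Sa by auto
      then show ?thesis using diag_nonneg[OF less.prems(1) i(1)] a_def by linarith
    qed
    define t where "t = (\<lambda>l. S i l / S i i)"
    define sf where "sf = (\<lambda>u. \<Sum>l<d. t l * u l)"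
    define Pi where "Pi = (\<lambda>u k. u k + (- sf u) * ev i k)"
    define R' where "R' = (\<lambda>k l. R k l - cnj (t k) * R i l - R k i * t l + (cnj (t k) * R i i) * t l)"
    define S' where "S' = chol S i"
    have sfc: "sf u = (\<Sum>l<d. S i l * u l) / S i i" for u
      unfolding sf_def t_def by (simp add: sum_divide_distrib)
    have R'qf: "qf d R' u = qf d R (Pi u)" for u
    proof -
      have e1: "cnj (sf u) = (\<Sum>k<d. cnj (u k) * cnj (t k))"
        unfolding sf_def by (simp add: mult.commute)
      have "qf d R (Pi u) = qf d R u + (- sf u) * bf d R u (ev i) + cnj (- sf u) * bf d R (ev i) u
          + cnj (- sf u) * (- sf u) * R i i"
        unfolding Pi_def qf_expand qf_ev[OF i(1)] ..
      also have "\<dots> = qf d R' u"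
        unfolding R'_def bf_add_mat bf_diff_mat bf_rank1 bf_ev_right[OF i(1)] bf_ev_left[OF i(1)]
        unfolding e1 sf_def
        by (simp add: algebra_simps sum_distrib_left sum_distrib_right sum_negf)
      finally show ?thesis by simp
    qed
    have R'psd: "psdf d R'"
    proof -
      have hii: "cnj (R i i) = R i i" using hermD[OF hR i(1) i(1)] .
      have "herm d R'" unfolding herm_def
      proof (intro allI impI)
        fix k l assume kl: "k < d" "l < d"
        show "R' k l = cnj (R' l k)"
          unfolding R'_def using hermD[OF hR kl(2) kl(1)] hermD[OF hR i(1) kl(1)] hermD[OF hR kl(2) i(1)] hii
          by (simp add: algebra_simps)
      qed
      moreover have "0 \<le> Re (qf d R' u)" for u
        unfolding R'qf using less.prems(2) unfolding psdf_def by auto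
      ultimately show ?thesis unfolding psdf_def by auto
    qed
    have S'psd: "psdf d S'" unfolding S'_def using chol_psd[of d S i, OF less.prems(1) i(1) i(2)] .
    have ker: "\<forall>u. (\<forall>k<d. (\<Sum>j<d. S' k j * u j) = 0) \<longrightarrow> (\<forall>k<d. (\<Sum>j<d. R' k j * u j) = 0)"
    proof (intro allI impI)
      fix u k assume h0: "\<forall>k<d. (\<Sum>j<d. S' k j * u j) = 0" and k: "k < d"
      have a1: "(\<Sum>j<d. S k j * Pi u j) = (\<Sum>j<d. S' k j * u j)" if "k < d" for k
      proof -
        have "(\<Sum>j<d. S k j * Pi u j) = (\<Sum>j<d. S k j * u j) - sf u * S k i"
          unfolding Pi_def rows_shift[OF i(1)] by simp
        also have "\<dots> = (\<Sum>j<d. S' k j * u j)"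
          unfolding S'_def chol_def sfc
          by (simp add: algebra_simps sum_subtractf sum_distrib_left sum_divide_distrib)
        finally show ?thesis .
      qed
      have "\<forall>k<d. (\<Sum>j<d. S k j * Pi u j) = 0" using a1 h0 by simp
      then have a2: "\<forall>k<d. (\<Sum>j<d. R k j * Pi u j) = 0" using less.prems(3) by blast
      have "(\<Sum>j<d. R' k j * u j) = (\<Sum>j<d. R k j * Pi u j) - cnj (t k) * (\<Sum>j<d. R i j * Pi u j)"
        unfolding Pi_def rows_shift[OF i(1)] R'_def sf_def
        by (simp add: algebra_simps sum_subtractf sum.distrib sum_distrib_left)
      then show "(\<Sum>j<d. R' k j * u j) = 0" using a2 k i(1) by simp
    qed
    obtain \<mu>' where mu': "\<mu>' \<ge> 0" "\<forall>u. Re (qf d R' u) \<le> \<mu>' * Re (qf d S' u)"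
      using less.hyps[of S' R'] chol_nzc[of i d S, OF i(1) i(2)] S'_def S'psd R'psd ker by blast
    define r where "r = Re (R i i)"
    have r0: "r \<ge> 0" unfolding r_def using diag_nonneg[OF less.prems(2) i(1)] .
    define \<mu> where "\<mu> = max (2 * \<mu>') (2 * r / a)"
    have "Re (qf d R u) \<le> \<mu> * Re (qf d S u)" for u
    proof -
      define b where "b = bf d S u (ev i)"
      define B where "B = (cmod b)^2 / a"
      define G where "G = Re (qf d S u)"
      have B0: "B \<ge> 0" unfolding B_def using apos by simp
      have GB: "Re (qf d S' u) = G - B"
        unfolding S'_def chol_qf_re[OF hS i(1) i(2)] G_def B_def b_def a_def ..
      have GB0: "G - B \<ge> 0" using S'psd GB unfolding psdf_def by metis
      have ueq: "(\<lambda>k. Pi u k + sf u * ev i k) = u" unfolding Pi_def by (rule ext) simp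
      have cb: "cnj b = (\<Sum>l<d. S i l * u l)"
        unfolding b_def bf_ev_right[OF i(1)] cnj_sum complex_cnj_mult complex_cnj_cnj
        using hermD[OF hS _ i(1)] by (auto simp: mult.commute intro!: sum.cong)
      have "sf u = cnj b / of_real a"
        unfolding sfc cb Sa ..
      then have zs: "(cmod (sf u))^2 = (cmod b)^2 / a^2"
        using apos by (simp add: norm_divide power_divide)
      have p1: "Re (qf d R u) \<le> 2 * Re (qf d R (Pi u)) + 2 * (cmod (sf u))^2 * Re (qf d R (ev i))"
        using parallel[OF less.prems(2), of "Pi u" "sf u" "ev i"] unfolding ueq .
      have p2: "Re (qf d R (Pi u)) \<le> \<mu>' * (G - B)"
        using mu'(2) GB R'qf by metis
      have p3: "2 * (cmod (sf u))^2 * Re (qf d R (ev i)) = (2 * r / a) * B"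
        unfolding zs qf_ev[OF i(1)] r_def B_def using apos by (simp add: power2_eq_square field_simps)
      have "Re (qf d R u) \<le> 2 * \<mu>' * (G - B) + (2 * r / a) * B" using p1 p2 p3 by linarith
      also have "\<dots> \<le> \<mu> * (G - B) + \<mu> * B"
        unfolding \<mu>_def using GB0 B0 by (intro add_mono mult_right_mono) auto
      finally show ?thesis unfolding G_def by (simp add: algebra_simps)
    qed
    moreover have "\<mu> \<ge> 0" unfolding \<mu>_def using mu'(1) by simp
    ultimately show ?thesis by blast
  qed
qed


definition ent :: "complex mat \<Rightarrow> nat \<Rightarrow> nat \<Rightarrow> complex" where "ent A = (\<lambda>i j. A $$ (i, j))"

lemma bf_cong:
  assumes "\<forall>i<d. \<forall>j<d. A i j = B i j" "\<forall>i<d. u i = u' i" "\<forall>i<d. w i = w' i"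
  shows "bf d A u w = bf d B u' w'"
  unfolding bf_def using assms by (auto intro!: sum.cong)

lemma psdf_cong:
  assumes "\<forall>i<d. \<forall>j<d. A i j = B i j" "psdf d A"
  shows "psdf d B"
proof -
  have "herm d B" using assms unfolding psdf_def herm_def by metis
  moreover have "bf d B u u = bf d A u u" for u using bf_cong[of d B A u u u u] assms(1) by metis
  ultimately show ?thesis using assms(2) unfolding psdf_def by auto
qed

lemma mv_index:
  assumes "A \<in> carrier_mat d d" "v \<in> carrier_vec d" "k < d"
  shows "vec_index (A *\<^sub>v v) k = (\<Sum>j<d. A $$ (k, j) * vec_index v j)"
  using assms by (auto simp: scalar_prod_def lessThan_atLeast0 intro!: sum.cong)

lemma quad:
  assumes "A \<in> carrier_mat d d" "v \<in> carrier_vec d"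
  shows "(A *\<^sub>v v) \<bullet>c v = qf d (ent A) (vec_index v)"
proof -
  have "(A *\<^sub>v v) \<bullet>c v = (\<Sum>i<d. vec_index (A *\<^sub>v v) i * cnj (vec_index v i))"
    using assms by (auto simp: scalar_prod_def lessThan_atLeast0 intro!: sum.cong)
  also have "\<dots> = (\<Sum>i<d. (\<Sum>j<d. A $$ (i, j) * vec_index v j) * cnj (vec_index v i))"
    using mv_index[OF assms] by simp
  also have "\<dots> = qf d (ent A) (vec_index v)"
    unfolding bf_def ent_def by (simp add: sum_distrib_left sum_distrib_right mult_ac)
  finally show ?thesis .
qed

lemma psdD:
  assumes "psd d A"
  shows "A \<in> carrier_mat d d" "\<And>i j. i < d \<Longrightarrow> j < d \<Longrightarrow> A $$ (i, j) = cnj (A $$ (j, i))"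
    "\<And>v. v \<in> carrier_vec d \<Longrightarrow> 0 \<le> Re ((A *\<^sub>v v) \<bullet>c v)"
proof -
  have c: "A \<in> carrier_mat d d \<and> (\<forall>i<d. \<forall>j<d. A $$ (i, j) = cnj (A $$ (j, i)))
     \<and> (\<forall>v \<in> carrier_vec d. Im ((A *\<^sub>v v) \<bullet>c v) = 0 \<and> Re ((A *\<^sub>v v) \<bullet>c v) \<ge> 0)"
    using assms unfolding psd_def .
  show "A \<in> carrier_mat d d" using conjunct1[OF c] .
  show "\<And>i j. i < d \<Longrightarrow> j < d \<Longrightarrow> A $$ (i, j) = cnj (A $$ (j, i))"
    using conjunct1[OF conjunct2[OF c]] by blast
  show "\<And>v. v \<in> carrier_vec d \<Longrightarrow> 0 \<le> Re ((A *\<^sub>v v) \<bullet>c v)"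
    using conjunct2[OF conjunct2[OF c]] by blast
qed

lemma psd_psdf: assumes "psd d A" shows "psdf d (ent A)"
proof -
  have A: "A \<in> carrier_mat d d" using psdD(1)[OF assms] .
  have h: "herm d (ent A)" unfolding herm_def ent_def using psdD(2)[OF assms] by blast
  have "0 \<le> Re (qf d (ent A) u)" for u
  proof -
    have v: "vec d u \<in> carrier_vec d" by simp
    have "0 \<le> Re ((A *\<^sub>v vec d u) \<bullet>c vec d u)" using psdD(3)[OF assms v] .
    moreover have "(A *\<^sub>v vec d u) \<bullet>c vec d u = qf d (ent A) (vec_index (vec d u))" by (rule quad[OF A v])
    moreover have "qf d (ent A) (vec_index (vec d u)) = qf d (ent A) u" by (rule bf_cong) auto
    ultimately show ?thesis by simp
  qed
  then show ?thesis using h unfolding psdf_def by blast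
qed

lemma psdf_psd: assumes "A \<in> carrier_mat d d" "psdf d (ent A)" shows "psd d A"
proof -
  have h: "herm d (ent A)" using assms unfolding psdf_def by blast
  have nn: "0 \<le> Re (qf d (ent A) u)" for u using assms(2) unfolding psdf_def by blast
  have "Im ((A *\<^sub>v v) \<bullet>c v) = 0 \<and> Re ((A *\<^sub>v v) \<bullet>c v) \<ge> 0" if v: "v \<in> carrier_vec d" for v
    unfolding quad[OF assms(1) v] using qf_real[OF h] nn by blast
  moreover have "\<forall>i<d. \<forall>j<d. A $$ (i, j) = cnj (A $$ (j, i))" using h unfolding herm_def ent_def .
  ultimately show ?thesis using assms(1) unfolding psd_def by blast
qed

lemma trace_mult:
  assumes "A \<in> carrier_mat d d" "B \<in> carrier_mat d d"
  shows "mat_trace (A * B) = (\<Sum>a<d. \<Sum>b<d. ent A a b * ent B b a)"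
  using assms unfolding mat_trace_def ent_def
  by (auto simp: scalar_prod_def lessThan_atLeast0 intro!: sum.cong)

lemma trace_psd_mat:
  assumes "psd d P" "psd d F"
  shows "0 \<le> Re (mat_trace (P * F))"
proof -
  have "mat_trace (P * F) = (\<Sum>a<d. \<Sum>b<d. ent P a b * ent F b a)"
    using assms unfolding psd_def by (intro trace_mult) auto
  then show ?thesis using trace_psd[OF psd_psdf[OF assms(1)] psd_psdf[OF assms(2)]] by (simp only:)
qed

lemma trace_povm:
  assumes "A \<in> carrier_mat d d" "povm d Y F"
  shows "(\<Sum>y\<in>Y. mat_trace (A * F y)) = mat_trace A"
proof -
  have F: "\<forall>y\<in>Y. F y \<in> carrier_mat d d" using assms(2) unfolding povm_def psd_def by auto
  have "(\<Sum>y\<in>Y. mat_trace (A * F y)) = (\<Sum>y\<in>Y. \<Sum>a<d. \<Sum>b<d. ent A a b * ent (F y) b a)"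
    using trace_mult[OF assms(1)] F by simp
  also have "\<dots> = (\<Sum>a<d. \<Sum>b<d. \<Sum>y\<in>Y. ent A a b * ent (F y) b a)"
    by (rule trans[OF sum.swap], rule sum.cong[OF refl], rule sum.swap)
  also have "\<dots> = (\<Sum>a<d. \<Sum>b<d. ent A a b * (\<Sum>y\<in>Y. ent (F y) b a))"
    by (simp add: sum_distrib_left)
  also have "\<dots> = (\<Sum>a<d. \<Sum>b<d. ent A a b * (if b = a then 1 else 0))"
    using assms(2) unfolding povm_def ent_def by (auto intro!: sum.cong)
  also have "\<dots> = mat_trace A"
    using assms(1) unfolding mat_trace_def ent_def by (simp add: if_distrib[of "\<lambda>x. _ * x"] sum.delta' cong: if_cong)
  finally show ?thesis .
qed



lemma bf_scale_mat: "bf d (\<lambda>i j. z * A i j) u w = z * bf d A u w"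
  by (simp add: bf_def sum_distrib_left mult_ac)

lemma bf_sum_mat:
  assumes "finite X"
  shows "bf d (\<lambda>i j. \<Sum>x\<in>X. c x * A x i j) u w = (\<Sum>x\<in>X. c x * bf d (A x) u w)"
  using assms
proof (induction X rule: finite_induct)
  case empty
  then show ?case by (simp add: bf_def)
next
  case (insert a X)
  have "bf d (\<lambda>i j. \<Sum>x\<in>insert a X. c x * A x i j) u w
      = bf d (\<lambda>i j. c a * A a i j + (\<Sum>x\<in>X. c x * A x i j)) u w"
    using insert.hyps by simp
  also have "\<dots> = c a * bf d (A a) u w + bf d (\<lambda>i j. \<Sum>x\<in>X. c x * A x i j) u w"
    unfolding bf_add_mat bf_scale_mat ..
  finally show ?case using insert by simp
qed

lemma psdf_comb:
  assumes "finite X" "\<forall>x\<in>X. c x \<ge> 0" "\<forall>x\<in>X. psdf d (A x)"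
  shows "psdf d (\<lambda>i j. \<Sum>x\<in>X. complex_of_real (c x) * A x i j)"
proof -
  have "herm d (\<lambda>i j. \<Sum>x\<in>X. complex_of_real (c x) * A x i j)"
    unfolding herm_def
  proof (intro allI impI)
    fix i j assume ij: "i < d" "j < d"
    have "cnj (\<Sum>x\<in>X. complex_of_real (c x) * A x j i) = (\<Sum>x\<in>X. complex_of_real (c x) * cnj (A x j i))"
      by simp
    also have "\<dots> = (\<Sum>x\<in>X. complex_of_real (c x) * A x i j)"
    proof (rule sum.cong[OF refl])
      fix x assume "x \<in> X"
      then have "herm d (A x)" using assms(3) unfolding psdf_def by blast
      then have "cnj (A x j i) = A x i j" using hermD ij by blast
      then show "complex_of_real (c x) * cnj (A x j i) = complex_of_real (c x) * A x i j" by simp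
    qed
    finally show "(\<Sum>x\<in>X. complex_of_real (c x) * A x i j) = cnj (\<Sum>x\<in>X. complex_of_real (c x) * A x j i)" by simp
  qed
  moreover have "0 \<le> Re (qf d (\<lambda>i j. \<Sum>x\<in>X. complex_of_real (c x) * A x i j) u)" for u
  proof -
    have "Re (qf d (\<lambda>i j. \<Sum>x\<in>X. complex_of_real (c x) * A x i j) u) = (\<Sum>x\<in>X. c x * Re (qf d (A x) u))"
      unfolding bf_sum_mat[OF assms(1)] Re_sum by simp
    also have "\<dots> \<ge> 0" using assms(2,3) unfolding psdf_def by (intro sum_nonneg) simp
    finally show ?thesis .
  qed
  ultimately show ?thesis unfolding psdf_def by blast
qed

lemma psdf_lin:
  assumes "psdf d S" "psdf d R" "\<forall>u. Re (qf d R u) \<le> \<mu> * Re (qf d S u)"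
  shows "psdf d (\<lambda>i j. complex_of_real \<mu> * S i j - R i j)"
proof -
  have hS: "herm d S" and hR: "herm d R" using assms unfolding psdf_def by blast+
  have "herm d (\<lambda>i j. complex_of_real \<mu> * S i j - R i j)"
    unfolding herm_def
  proof (intro allI impI)
    fix i j assume ij: "i < d" "j < d"
    have "cnj (S j i) = S i j" "cnj (R j i) = R i j" using hermD[OF hS ij(2,1)] hermD[OF hR ij(2,1)] by blast+
    then show "complex_of_real \<mu> * S i j - R i j = cnj (complex_of_real \<mu> * S j i - R j i)" by simp
  qed
  moreover have "0 \<le> Re (qf d (\<lambda>i j. complex_of_real \<mu> * S i j - R i j) u)" for u
    unfolding bf_diff_mat bf_scale_mat using assms(3) by simp
  ultimately show ?thesis unfolding psdf_def by blast
qed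

lemma trace_lin:
  assumes "A \<in> carrier_mat d d" "B \<in> carrier_mat d d" "F \<in> carrier_mat d d"
  shows "Re (mat_trace ((complex_of_real \<mu> \<cdot>\<^sub>m A - B) * F)) = \<mu> * Re (mat_trace (A * F)) - Re (mat_trace (B * F))"
proof -
  have M: "complex_of_real \<mu> \<cdot>\<^sub>m A - B \<in> carrier_mat d d" using assms(2) by (rule minus_carrier_mat)
  have e: "ent (complex_of_real \<mu> \<cdot>\<^sub>m A - B) a b = complex_of_real \<mu> * ent A a b - ent B a b" if "a < d" "b < d" for a b
    using that assms unfolding ent_def by simp
  have "mat_trace ((complex_of_real \<mu> \<cdot>\<^sub>m A - B) * F) = (\<Sum>a<d. \<Sum>b<d. ent (complex_of_real \<mu> \<cdot>\<^sub>m A - B) a b * ent F b a)"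
    by (rule trace_mult[OF M assms(3)])
  also have "\<dots> = (\<Sum>a<d. \<Sum>b<d. (complex_of_real \<mu> * ent A a b - ent B a b) * ent F b a)"
    using e by (intro sum.cong refl) simp
  also have "\<dots> = complex_of_real \<mu> * (\<Sum>a<d. \<Sum>b<d. ent A a b * ent F b a) - (\<Sum>a<d. \<Sum>b<d. ent B a b * ent F b a)"
    by (simp add: algebra_simps sum_subtractf sum_distrib_left)
  also have "\<dots> = complex_of_real \<mu> * mat_trace (A * F) - mat_trace (B * F)"
    using trace_mult[OF assms(1,3)] trace_mult[OF assms(2,3)] by simp
  finally show ?thesis by simp
qed

lemma trace_diag_lin:
  assumes "A \<in> carrier_mat d d" "B \<in> carrier_mat d d" "psd d (complex_of_real \<mu> \<cdot>\<^sub>m A - B)"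
  shows "0 \<le> \<mu> * Re (mat_trace A) - Re (mat_trace B)"
proof -
  let ?M = "complex_of_real \<mu> \<cdot>\<^sub>m A - B"
  have p: "psdf d (ent ?M)" using psd_psdf[OF assms(3)] .
  have "mat_trace ?M = (\<Sum>i<d. ent ?M i i)" using assms unfolding mat_trace_def ent_def by simp
  then have "Re (mat_trace ?M) = (\<Sum>i<d. Re (ent ?M i i))" by simp
  also have "\<dots> \<ge> 0" using diag_nonneg[OF p] by (intro sum_nonneg) simp
  finally have "0 \<le> Re (mat_trace ?M)" .
  also have "mat_trace ?M = complex_of_real \<mu> * mat_trace A - mat_trace B"
    using assms unfolding mat_trace_def by (simp add: sum_subtractf sum_distrib_left)
  finally show ?thesis by simp
qed

lemma ker_bridge:
  assumes "supp_subset d R S" "S \<in> carrier_mat d d" "R \<in> carrier_mat d d"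
  shows "\<forall>u. (\<forall>k<d. (\<Sum>j<d. ent S k j * u j) = 0) \<longrightarrow> (\<forall>k<d. (\<Sum>j<d. ent R k j * u j) = 0)"
proof (intro allI impI)
  fix u k assume h: "\<forall>k<d. (\<Sum>j<d. ent S k j * u j) = 0" and k: "k < d"
  have v: "vec d u \<in> carrier_vec d" by simp
  have "S *\<^sub>v vec d u = 0\<^sub>v d"
  proof (rule eq_vecI)
    fix i assume "i < dim_vec (0\<^sub>v d :: complex vec)"
    then have i: "i < d" by simp
    have "vec_index (S *\<^sub>v vec d u) i = (\<Sum>j<d. S $$ (i, j) * vec_index (vec d u) j)"
      using mv_index[OF assms(2) v i] .
    also have "\<dots> = (\<Sum>j<d. ent S i j * u j)" unfolding ent_def by (intro sum.cong refl) simp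
    finally show "vec_index (S *\<^sub>v vec d u) i = vec_index (0\<^sub>v d) i" using h i by simp
  qed (use assms(2) in simp)
  then have "R *\<^sub>v vec d u = 0\<^sub>v d" using assms(1) v unfolding supp_subset_def by blast
  then have "vec_index (R *\<^sub>v vec d u) k = 0" using k by simp
  moreover have "vec_index (R *\<^sub>v vec d u) k = (\<Sum>j<d. ent R k j * u j)"
    using mv_index[OF assms(3) v k] unfolding ent_def by simp
  ultimately show "(\<Sum>j<d. ent R k j * u j) = 0" by simp
qed


theorem proposition1:
  fixes d :: nat and X :: "'x set" and p :: "'x \<Rightarrow> real" and \<rho> :: "'x \<Rightarrow> complex mat"
  assumes "finite X"
    and "\<forall>x\<in>X. p x > 0" and "(\<Sum>x\<in>X. p x) = 1"
    and "\<forall>x\<in>X. density_op d (\<rho> x)"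
  shows "max_quantum_leakage d X \<rho>
     \<le> (INF \<pi> \<in> pmfs_on X. Max ((\<lambda>x. D_max d (\<rho> x) (mixture d X \<pi> \<rho>)) ` X))"
proof -
  have \<rho>psd: "psd d (\<rho> x)" if "x \<in> X" for x using assms(4) that unfolding density_op_def by blast
  have \<rho>tr: "mat_trace (\<rho> x) = 1" if "x \<in> X" for x using assms(4) that unfolding density_op_def by blast
  have \<rho>c: "\<rho> x \<in> carrier_mat d d" if "x \<in> X" for x using psdD(1)[OF \<rho>psd[OF that]] .
  have Xne: "X \<noteq> {}" using assms(3) by auto
  then obtain x0 where x0: "x0 \<in> X" by blast
  show ?thesis
  proof (rule INF_greatest)
    fix \<pi> assume \<pi>: "\<pi> \<in> pmfs_on X"
    have \<pi>0: "\<forall>x\<in>X. \<pi> x \<ge> 0" and \<pi>1: "(\<Sum>x\<in>X. \<pi> x) = 1" using \<pi> unfolding pmfs_on_def by auto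
    define \<sigma> where "\<sigma> = mixture d X \<pi> \<rho>"
    have \<sigma>c: "\<sigma> \<in> carrier_mat d d" unfolding \<sigma>_def mixture_def by simp
    have \<sigma>ent: "\<forall>i<d. \<forall>j<d. (\<lambda>i j. \<Sum>x\<in>X. complex_of_real (\<pi> x) * ent (\<rho> x) i j) i j = ent \<sigma> i j"
      unfolding \<sigma>_def mixture_def ent_def by simp
    have \<sigma>psdf: "psdf d (ent \<sigma>)"
      by (rule psdf_cong[OF \<sigma>ent psdf_comb[OF assms(1) \<pi>0]]) (use psd_psdf[OF \<rho>psd] in blast)
    have \<sigma>psd: "psd d \<sigma>" using psdf_psd[OF \<sigma>c \<sigma>psdf] .
    have \<sigma>tr: "mat_trace \<sigma> = 1"
    proof -
      have "mat_trace \<sigma> = (\<Sum>i<d. \<Sum>x\<in>X. complex_of_real (\<pi> x) * \<rho> x $$ (i, i))"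
        unfolding \<sigma>_def mixture_def mat_trace_def by simp
      also have "\<dots> = (\<Sum>x\<in>X. complex_of_real (\<pi> x) * (\<Sum>i<d. \<rho> x $$ (i, i)))"
        by (subst sum.swap) (simp add: sum_distrib_left)
      also have "\<dots> = (\<Sum>x\<in>X. complex_of_real (\<pi> x) * mat_trace (\<rho> x))"
      proof (rule sum.cong[OF refl])
        fix x assume "x \<in> X"
        then have "dim_row (\<rho> x) = d" using \<rho>c carrier_matD(1) by blast
        then show "complex_of_real (\<pi> x) * (\<Sum>i<d. \<rho> x $$ (i, i)) = complex_of_real (\<pi> x) * mat_trace (\<rho> x)"
          unfolding mat_trace_def by simp
      qed
      also have "\<dots> = (\<Sum>x\<in>X. complex_of_real (\<pi> x))" using \<rho>tr by simp
      also have "\<dots> = 1" using \<pi>1 by (metis of_real_1 of_real_sum)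
      finally show ?thesis .
    qed
    have trnn: "0 \<le> Re (mat_trace (\<sigma> * F))" if "psd d F" for F using trace_psd_mat[OF \<sigma>psd that] .
    show "max_quantum_leakage d X \<rho> \<le> Max ((\<lambda>x. D_max d (\<rho> x) (mixture d X \<pi> \<rho>)) ` X)"
      unfolding \<sigma>_def[symmetric]
    proof (cases "\<forall>x\<in>X. supp_subset d (\<rho> x) \<sigma>")
      case False
      then obtain x where x: "x \<in> X" "\<not> supp_subset d (\<rho> x) \<sigma>" by blast
      then have "D_max d (\<rho> x) \<sigma> = \<infinity>" unfolding D_max_def by simp
      then have "\<infinity> \<le> Max ((\<lambda>x. D_max d (\<rho> x) \<sigma>) ` X)"
      proof -
        have "D_max d (\<rho> x) \<sigma> \<le> Max ((\<lambda>x. D_max d (\<rho> x) \<sigma>) ` X)"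
          using assms(1) x(1) by (intro Max_ge) auto
        then show ?thesis using \<open>D_max d (\<rho> x) \<sigma> = \<infinity>\<close> by simp
      qed
      then show "max_quantum_leakage d X \<rho> \<le> Max ((\<lambda>x. D_max d (\<rho> x) \<sigma>) ` X)" by (simp add: ereal_infty_less_eq(1))
    next
      case True
      define S where "S x = {\<mu>::real. op_le d (\<rho> x) (complex_of_real \<mu> \<cdot>\<^sub>m \<sigma>)}" for x
      define m where "m x = Inf (S x)" for x
      have Dm: "D_max d (\<rho> x) \<sigma> = ereal (log 2 (m x))" if "x \<in> X" for x
        using True that unfolding D_max_def m_def S_def by simp
      have key: "Re (mat_trace (\<rho> x * F)) \<le> \<mu> * Re (mat_trace (\<sigma> * F))"
        if x: "x \<in> X" and mu: "\<mu> \<in> S x" and F: "psd d F" for x \<mu> F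
      proof -
        have "psd d (complex_of_real \<mu> \<cdot>\<^sub>m \<sigma> - \<rho> x)" using mu unfolding S_def op_le_def by blast
        from trace_psd_mat[OF this F] trace_lin[OF \<sigma>c \<rho>c[OF x] psdD(1)[OF F]]
        show ?thesis by simp
      qed
      have S1: "1 \<le> \<mu>" if x: "x \<in> X" and mu: "\<mu> \<in> S x" for x \<mu>
      proof -
        have "psd d (complex_of_real \<mu> \<cdot>\<^sub>m \<sigma> - \<rho> x)" using mu unfolding S_def op_le_def by blast
        from trace_diag_lin[OF \<sigma>c \<rho>c[OF x] this] show ?thesis using \<sigma>tr \<rho>tr[OF x] by simp
      qed
      have Sne: "S x \<noteq> {}" if x: "x \<in> X" for x
      proof -
        obtain \<mu>0 where mu0: "\<mu>0 \<ge> 0" "\<forall>u. Re (qf d (ent (\<rho> x)) u) \<le> \<mu>0 * Re (qf d (ent \<sigma>) u)"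
          using ratio_bound[OF \<sigma>psdf psd_psdf[OF \<rho>psd[OF x]] ker_bridge[OF bspec[OF True x] \<sigma>c \<rho>c[OF x]]]
          by blast
        have pl: "psdf d (\<lambda>i j. complex_of_real \<mu>0 * ent \<sigma> i j - ent (\<rho> x) i j)"
          by (rule psdf_lin[OF \<sigma>psdf psd_psdf[OF \<rho>psd[OF x]] mu0(2)])
        have Mc: "complex_of_real \<mu>0 \<cdot>\<^sub>m \<sigma> - \<rho> x \<in> carrier_mat d d"
          using \<rho>c[OF x] by (rule minus_carrier_mat)
        have "\<forall>i<d. \<forall>j<d. (\<lambda>i j. complex_of_real \<mu>0 * ent \<sigma> i j - ent (\<rho> x) i j) i j
            = ent (complex_of_real \<mu>0 \<cdot>\<^sub>m \<sigma> - \<rho> x) i j"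
          using \<sigma>c \<rho>c[OF x] unfolding ent_def by simp
        from psdf_cong[OF this pl] have "psd d (complex_of_real \<mu>0 \<cdot>\<^sub>m \<sigma> - \<rho> x)"
          by (rule psdf_psd[OF Mc])
        then have "\<mu>0 \<in> S x" unfolding S_def op_le_def using \<rho>c[OF x] \<sigma>c by simp
        then show ?thesis by blast
      qed
      have bdd: "bdd_below (S x)" if "x \<in> X" for x
        using S1[OF that] unfolding bdd_below_def by blast
      have mge: "1 \<le> m x" if "x \<in> X" for x
        unfolding m_def using Sne[OF that] S1[OF that] by (intro cInf_greatest) auto
      have mbound: "Re (mat_trace (\<rho> x * F)) \<le> m x * Re (mat_trace (\<sigma> * F))"
        if x: "x \<in> X" and F: "psd d F" for x F
      proof (cases "Re (mat_trace (\<sigma> * F)) = 0")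
        case True
        obtain \<mu> where "\<mu> \<in> S x" using Sne[OF x] by blast
        from key[OF x this F] show ?thesis using True by simp
      next
        case False
        then have t: "Re (mat_trace (\<sigma> * F)) > 0" using trnn[OF F] by linarith
        have "Re (mat_trace (\<rho> x * F)) / Re (mat_trace (\<sigma> * F)) \<le> m x"
          unfolding m_def
        proof (rule cInf_greatest[OF Sne[OF x]])
          fix \<mu> assume "\<mu> \<in> S x"
          from key[OF x this F] show "Re (mat_trace (\<rho> x * F)) / Re (mat_trace (\<sigma> * F)) \<le> \<mu>"
            using t by (simp add: pos_divide_le_eq)
        qed
        then show ?thesis using t by (simp add: pos_divide_le_eq)
      qed
      define M where "M = Max (m ` X)"
      have "M \<in> m ` X" unfolding M_def using assms(1) Xne by (intro Max_in) auto
      then obtain xs where xs: "xs \<in> X" "M = m xs" by blast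
      have mM: "m x \<le> M" if "x \<in> X" for x unfolding M_def using assms(1) that by (intro Max_ge) auto
      have "max_quantum_leakage d X \<rho> \<le> ereal (log 2 M)"
        unfolding max_quantum_leakage_def
      proof (rule SUP_least)
        fix YF assume "YF \<in> {(Y, F). povm d Y F}"
        then obtain Y F where YF: "YF = (Y, F)" and pv: "povm d Y F" by blast
        have finY: "finite Y" and Fpsd: "\<And>y. y \<in> Y \<Longrightarrow> psd d (F y)" using pv unfolding povm_def by blast+
        define T where "T = (\<Sum>y\<in>Y. Max ((\<lambda>x. Re (mat_trace (\<rho> x * F y))) ` X))"
        have "T \<le> (\<Sum>y\<in>Y. M * Re (mat_trace (\<sigma> * F y)))"
          unfolding T_def
        proof (rule sum_mono)
          fix y assume y: "y \<in> Y"
          show "Max ((\<lambda>x. Re (mat_trace (\<rho> x * F y))) ` X) \<le> M * Re (mat_trace (\<sigma> * F y))"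
          proof (subst Max_le_iff)
            show "finite ((\<lambda>x. Re (mat_trace (\<rho> x * F y))) ` X)" using assms(1) by simp
            show "(\<lambda>x. Re (mat_trace (\<rho> x * F y))) ` X \<noteq> {}" using Xne by simp
            show "\<forall>a\<in>(\<lambda>x. Re (mat_trace (\<rho> x * F y))) ` X. a \<le> M * Re (mat_trace (\<sigma> * F y))"
            proof
              fix a assume "a \<in> (\<lambda>x. Re (mat_trace (\<rho> x * F y))) ` X"
              then obtain x where x: "x \<in> X" and a: "a = Re (mat_trace (\<rho> x * F y))" by blast
              have "a \<le> m x * Re (mat_trace (\<sigma> * F y))" using mbound[OF x Fpsd[OF y]] a by simp
              also have "\<dots> \<le> M * Re (mat_trace (\<sigma> * F y))"
                using mM[OF x] trnn[OF Fpsd[OF y]] by (rule mult_right_mono)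
              finally show "a \<le> M * Re (mat_trace (\<sigma> * F y))" .
            qed
          qed
        qed
        also have "\<dots> = M * Re (\<Sum>y\<in>Y. mat_trace (\<sigma> * F y))"
          by (simp add: sum_distrib_left)
        also have "\<dots> = M" using trace_povm[OF \<sigma>c pv] \<sigma>tr by simp
        finally have TM: "T \<le> M" .
        have "(\<Sum>y\<in>Y. Re (mat_trace (\<rho> x0 * F y))) \<le> T"
          unfolding T_def
        proof (rule sum_mono)
          fix y assume "y \<in> Y"
          show "Re (mat_trace (\<rho> x0 * F y)) \<le> Max ((\<lambda>x. Re (mat_trace (\<rho> x * F y))) ` X)"
            using assms(1) x0 by (intro Max_ge) auto
        qed
        moreover have "(\<Sum>y\<in>Y. Re (mat_trace (\<rho> x0 * F y))) = 1"
          using trace_povm[OF \<rho>c[OF x0] pv] \<rho>tr[OF x0] by (simp flip: Re_sum)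
        ultimately have T1: "1 \<le> T" by simp
        have "log 2 T \<le> log 2 M" using T1 TM by simp
        then show "ereal (log 2 (\<Sum>y\<in>fst YF. Max ((\<lambda>x. Re (mat_trace (\<rho> x * snd YF y))) ` X))) \<le> ereal (log 2 M)"
          unfolding YF T_def by simp
      qed
      also have "ereal (log 2 M) \<le> Max ((\<lambda>x. D_max d (\<rho> x) \<sigma>) ` X)"
      proof -
        have "D_max d (\<rho> xs) \<sigma> \<in> (\<lambda>x. D_max d (\<rho> x) \<sigma>) ` X" using xs(1) by (rule imageI)
        then have "D_max d (\<rho> xs) \<sigma> \<le> Max ((\<lambda>x. D_max d (\<rho> x) \<sigma>) ` X)"
          using assms(1) by (intro Max_ge) auto
        then show ?thesis using Dm[OF xs(1)] xs(2) by simp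
      qed
      finally show "max_quantum_leakage d X \<rho> \<le> Max ((\<lambda>x. D_max d (\<rho> x) \<sigma>) ` X)" .
    qed
  qed
qed

end
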